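(* For every integer $n \ge 1$, $\Lambda_{n+1} \ge \Lambda_n$; that is, $\Lambda_n$ is nondecreasing in $n$.
   Context: All graphs are finite, simple and undirected (not necessarily connected). For a graph $G=(V,E)$ and a vertex $v\in V$, let $N_v$ be the set of neighbours of $v$. The local complementation (LC) of $G$ at $v$ is the graph $G^v$ obtained from $G$ by complementing the subgraph induced on $N_v$ (i.e., for each pair of distinct $a,b\in N_v$, the edge $ab$ is added if absent and removed if present; all other adjacencies are unchanged). The LC orbit $[G]$ of $G$ is the set of all graphs obtainable from $G$ by a finite sequence of local complementations (graphs are considered up to isomorphism). Let $\alpha(G)$ denote the independence number of $G$ (size of a maximum independent set), and define $\lambda(G)=\max_{H\in[G]}\alpha(H)$. Let $\Lambda_n$ be the minimum of $\lambda(G)$ over all graphs $G$ on $n$ vertices. *)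

theory Defs
  imports Main
begin

definition graph_on :: "nat \<Rightarrow> (nat \<Rightarrow> nat \<Rightarrow> bool) \<Rightarrow> bool" where
  "graph_on n E \<longleftrightarrow> (\<forall>u v. E u v \<longrightarrow> u < n \<and> v < n) \<and> (\<forall>u v. E u v = E v u) \<and> (\<forall>u. \<not> E u u)"

definition local_comp :: "(nat \<Rightarrow> nat \<Rightarrow> bool) \<Rightarrow> nat \<Rightarrow> (nat \<Rightarrow> nat \<Rightarrow> bool)" where
  "local_comp E v = (\<lambda>a b. if a \<noteq> b \<and> E v a \<and> E v b then \<not> E a b else E a b)"

inductive_set lc_orbit :: "(nat \<Rightarrow> nat \<Rightarrow> bool) \<Rightarrow> (nat \<Rightarrow> nat \<Rightarrow> bool) set"
  for E :: "nat \<Rightarrow> nat \<Rightarrow> bool" where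
  base: "E \<in> lc_orbit E"
| step: "H \<in> lc_orbit E \<Longrightarrow> local_comp H v \<in> lc_orbit E"

definition independent_set :: "nat \<Rightarrow> (nat \<Rightarrow> nat \<Rightarrow> bool) \<Rightarrow> nat set \<Rightarrow> bool" where
  "independent_set n E S \<longleftrightarrow> S \<subseteq> {..<n} \<and> (\<forall>a\<in>S. \<forall>b\<in>S. \<not> E a b)"

definition indep_number :: "nat \<Rightarrow> (nat \<Rightarrow> nat \<Rightarrow> bool) \<Rightarrow> nat" where
  "indep_number n E = Max (card ` {S. independent_set n E S})"

definition lc_lambda :: "nat \<Rightarrow> (nat \<Rightarrow> nat \<Rightarrow> bool) \<Rightarrow> nat" where
  "lc_lambda n E = Max (indep_number n ` lc_orbit E)"

definition Lambda :: "nat \<Rightarrow> nat" where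
  "Lambda n = Min (lc_lambda n ` {E. graph_on n E})"

end

theory Submission
  imports Defs
begin

definition restr :: "nat \<Rightarrow> (nat \<Rightarrow> nat \<Rightarrow> bool) \<Rightarrow> (nat \<Rightarrow> nat \<Rightarrow> bool)" where
  "restr n E = (\<lambda>a b. a < n \<and> b < n \<and> E a b)"

lemma indep_fin: "finite (card ` {S. independent_set m H S})"
proof -
  have "{S. independent_set m H S} \<subseteq> Pow {..<m}" by (auto simp: independent_set_def)
  then show ?thesis by (meson finite_Pow_iff finite_imageI finite_lessThan finite_subset)
qed

lemma indep_ne: "{S. independent_set m H S} \<noteq> {}"
proof -
  have "independent_set m H {}" by (simp add: independent_set_def)
  then show ?thesis by blast
qed

lemma indep_le: "indep_number m H \<le> m"
  unfolding indep_number_def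
proof (subst Max_le_iff)
  show "finite (card ` {S. independent_set m H S})" by (rule indep_fin)
  show "card ` {S. independent_set m H S} \<noteq> {}" using indep_ne by blast
  show "\<forall>a\<in>card ` {S. independent_set m H S}. a \<le> m"
    by (auto simp: independent_set_def dest: card_mono[OF finite_lessThan])
qed

lemma lam_le: "lc_lambda m E \<le> m"
  unfolding lc_lambda_def
proof (subst Max_le_iff)
  have "indep_number m ` lc_orbit E \<subseteq> {..m}" using indep_le by auto
  then show "finite (indep_number m ` lc_orbit E)" using finite_subset by blast
  show "indep_number m ` lc_orbit E \<noteq> {}" using lc_orbit.base by blast
  show "\<forall>a\<in>indep_number m ` lc_orbit E. a \<le> m" using indep_le by auto
qed

lemma lift: "H' \<in> lc_orbit (restr n G) \<Longrightarrow> \<exists>H\<in>lc_orbit G. restr n H = H'"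
proof (induction rule: lc_orbit.induct)
  case base
  then show ?case using lc_orbit.base by blast
next
  case (step H' v)
  then obtain K where K: "K \<in> lc_orbit G" "restr n K = H'" by blast
  show ?case
  proof (cases "v < n")
    case True
    have "restr n (local_comp K v) = local_comp H' v"
      using True K(2) by (auto simp: restr_def local_comp_def fun_eq_iff)
    then show ?thesis using K(1) lc_orbit.step by blast
  next
    case False
    have "local_comp H' v = H'"
      using False K(2) by (auto simp: restr_def local_comp_def fun_eq_iff)
    then show ?thesis using K by auto
  qed
qed

lemma indep_restr: "indep_number n (restr n H) \<le> indep_number (Suc n) H"
  unfolding indep_number_def
proof (rule Max_mono)
  show "card ` {S. independent_set n (restr n H) S} \<subseteq> card ` {S. independent_set (Suc n) H S}"
    by (rule image_mono) (auto simp: independent_set_def restr_def)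
  show "card ` {S. independent_set n (restr n H) S} \<noteq> {}" using indep_ne by blast
  show "finite (card ` {S. independent_set (Suc n) H S})" by (rule indep_fin)
qed

lemma lam_restr: "lc_lambda n (restr n G) \<le> lc_lambda (Suc n) G"
  unfolding lc_lambda_def
proof (subst Max_le_iff)
  have "indep_number n ` lc_orbit (restr n G) \<subseteq> {..n}" using indep_le by auto
  then show "finite (indep_number n ` lc_orbit (restr n G))" using finite_subset by blast
  show "indep_number n ` lc_orbit (restr n G) \<noteq> {}" using lc_orbit.base by blast
  have fin: "finite (indep_number (Suc n) ` lc_orbit G)"
  proof -
    have "indep_number (Suc n) ` lc_orbit G \<subseteq> {..Suc n}" using indep_le by auto
    then show ?thesis using finite_subset by blast
  qed
  show "\<forall>a\<in>indep_number n ` lc_orbit (restr n G). a \<le> Max (indep_number (Suc n) ` lc_orbit G)"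
  proof
    fix a assume "a \<in> indep_number n ` lc_orbit (restr n G)"
    then obtain H' where H': "H' \<in> lc_orbit (restr n G)" "a = indep_number n H'" by blast
    then obtain H where H: "H \<in> lc_orbit G" "restr n H = H'" using lift by blast
    have "a \<le> indep_number (Suc n) H" using H' H indep_restr by metis
    also have "\<dots> \<le> Max (indep_number (Suc n) ` lc_orbit G)"
      using fin H(1) by (simp add: Max_ge)
    finally show "a \<le> Max (indep_number (Suc n) ` lc_orbit G)" .
  qed
qed

lemma Lam_fin: "finite (lc_lambda m ` {E. graph_on m E})"
proof -
  have "lc_lambda m ` {E. graph_on m E} \<subseteq> {..m}" using lam_le by auto
  then show ?thesis using finite_subset by blast
qed

theorem mainTheorem1:
  fixes n :: nat
  assumes "n \<ge> 1"
  shows "Lambda n \<le> Lambda (Suc n)"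
proof -
  have "graph_on (Suc n) (\<lambda>_ _. False)" by (simp add: graph_on_def)
  then have ne: "lc_lambda (Suc n) ` {E. graph_on (Suc n) E} \<noteq> {}" by blast
  have "Lambda (Suc n) \<in> lc_lambda (Suc n) ` {E. graph_on (Suc n) E}"
    unfolding Lambda_def using Min_in[OF Lam_fin ne] .
  then obtain G where G: "graph_on (Suc n) G" "Lambda (Suc n) = lc_lambda (Suc n) G" by blast
  have "graph_on n (restr n G)" using G(1) by (auto simp: graph_on_def restr_def)
  then have "Lambda n \<le> lc_lambda n (restr n G)"
    unfolding Lambda_def using Lam_fin by (simp add: Min_le)
  also have "\<dots> \<le> Lambda (Suc n)" using G(2) lam_restr by simp
  finally show ?thesis .
qed

end
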